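(* Suppose the family of update functions $\mathrm{Upd}$ satisfies P1 and P2. Let $\mathcal{M}=(W,\mathcal{F})$ be a measure space, $\Pr\in\Delta_{\mathcal{M}}$, $A,B\in\mathcal{F}$, and suppose that for some $\Pr'\in\mathrm{Upd}^{\mathcal{M}}(\Pr,B)$ we have $0<\Pr(A|B)<1$ and $\Pr'(A)<\Pr(A|B)$. Then there exists $\Pr''\in\mathrm{Upd}^{\mathcal{M}}(\Pr,B)$ with $\Pr''(A)>\Pr(A|B)$.
   Context: A measure space is a pair $\mathcal{M}=(W,\mathcal{F})$ with $\mathcal{F}$ an algebra of subsets of $W$; $\Delta_{\mathcal{M}}$ is the set of all probability measures on $\mathcal{M}$. An update function on $\mathcal{M}$ is a map $\mathrm{Upd}^{\mathcal{M}}:2^{\Delta_{\mathcal{M}}}\times\mathcal{F}\to 2^{\Delta_{\mathcal{M}}}$ such that $\mathrm{Upd}^{\mathcal{M}}(X,B)=\emptyset$ whenever $\Pr(B)=0$ for all $\Pr\in X$; $\mathrm{Upd}^{\mathcal{M}}(\Pr,B)$ means $\mathrm{Upd}^{\mathcal{M}}(\{\Pr\},B)$. A family $\mathrm{Upd}=\{\mathrm{Upd}^{\mathcal{M}}\}$ has one update function for each measure space. $\Pr(A|B)=\Pr(A\cap B)/\Pr(B)$. A representation shift from $\mathcal{M}=(W,\mathcal{F})$ to $\mathcal{M}'=(W',\mathcal{F}')$ is a surjection $f:W\to W'$ with $f^{-1}(B)\in\mathcal{F}$ for all $B\in\mathcal{F}'$; $(f^*(\Pr))(A)=\Pr(f^{-1}(A))$,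 $f^*(X)=\{f^*(\Pr):\Pr\in X\}$. P1: for all $\mathcal{M}$, $X\subseteq\Delta_{\mathcal{M}}$, $B\in\mathcal{F}$: $\mathrm{Upd}^{\mathcal{M}}(X,B)\subseteq\{\Pr\in\Delta_{\mathcal{M}}:\Pr(B)=1\}$. P2: for every representation shift $f$ from $\mathcal{M}$ to $\mathcal{M}'$, every $X\subseteq\Delta_{\mathcal{M}}$ and $B\in\mathcal{F}'$: $\mathrm{Upd}^{\mathcal{M}'}(f^*(X),B)=f^*(\mathrm{Upd}^{\mathcal{M}}(X,f^{-1}(B)))$. *)

theory Defs
  imports "HOL-Analysis.Sigma_Algebra"
begin

text \<open>Measure spaces: pairs (W, F) with F an algebra of subsets of W (library notion
  algebra W F).  All measure spaces considered have points drawn from one fixed type 'w.\<close>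

definition prob_measures :: "'w set \<Rightarrow> 'w set set \<Rightarrow> ('w set \<Rightarrow> real) set" where
  "prob_measures W F = {P.
      (\<forall>A\<in>F. 0 \<le> P A) \<and> P W = 1 \<and>
      (\<forall>A\<in>F. \<forall>B\<in>F. A \<inter> B = {} \<longrightarrow> P (A \<union> B) = P A + P B) \<and>
      (\<forall>A. A \<notin> F \<longrightarrow> P A = 0)}"

definition cond_prob :: "('w set \<Rightarrow> real) \<Rightarrow> 'w set \<Rightarrow> 'w set \<Rightarrow> real" where
  "cond_prob P A B = P (A \<inter> B) / P B"

type_synonym 'w upd_family =
  "'w set \<Rightarrow> 'w set set \<Rightarrow> ('w set \<Rightarrow> real) set \<Rightarrow> 'w set \<Rightarrow> ('w set \<Rightarrow> real) set"

definition update_function :: "'w set \<Rightarrow> 'w set set \<Rightarrow>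
    (('w set \<Rightarrow> real) set \<Rightarrow> 'w set \<Rightarrow> ('w set \<Rightarrow> real) set) \<Rightarrow> bool" where
  "update_function W F U \<longleftrightarrow>
     (\<forall>X B. X \<subseteq> prob_measures W F \<longrightarrow> B \<in> F \<longrightarrow>
        U X B \<subseteq> prob_measures W F \<and>
        ((\<forall>P\<in>X. P B = 0) \<longrightarrow> U X B = {}))"

definition family_of_update_functions :: "'w upd_family \<Rightarrow> bool" where
  "family_of_update_functions Upd \<longleftrightarrow>
     (\<forall>W F. algebra W F \<longrightarrow> update_function W F (Upd W F))"

definition rep_shift :: "('w \<Rightarrow> 'w) \<Rightarrow> 'w set \<Rightarrow> 'w set set \<Rightarrow> 'w set \<Rightarrow> 'w set set \<Rightarrow> bool" where
  "rep_shift f W F W' F' \<longleftrightarrow> f ` W = W' \<and> (\<forall>B\<in>F'. f -` B \<inter> W \<in> F)"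

definition pushforward :: "('w \<Rightarrow> 'w) \<Rightarrow> 'w set \<Rightarrow> 'w set set \<Rightarrow> ('w set \<Rightarrow> real) \<Rightarrow> ('w set \<Rightarrow> real)" where
  "pushforward f W F' P = (\<lambda>A. if A \<in> F' then P (f -` A \<inter> W) else 0)"

definition P1 :: "'w upd_family \<Rightarrow> bool" where
  "P1 Upd \<longleftrightarrow> (\<forall>W F X B. algebra W F \<longrightarrow> X \<subseteq> prob_measures W F \<longrightarrow> B \<in> F \<longrightarrow>
      Upd W F X B \<subseteq> {P \<in> prob_measures W F. P B = 1})"

definition P2 :: "'w upd_family \<Rightarrow> bool" where
  "P2 Upd \<longleftrightarrow> (\<forall>W F W' F' f X B. algebra W F \<longrightarrow> algebra W' F' \<longrightarrow>
      rep_shift f W F W' F' \<longrightarrow> X \<subseteq> prob_measures W F \<longrightarrow> B \<in> F' \<longrightarrow>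
      Upd W' F' (pushforward f W F' ` X) B =
        pushforward f W F' ` Upd W F X (f -` B \<inter> W))"

end

theory Submission
  imports Defs "HOL-Analysis.Kronecker_Approximation_Theorem"
begin
lemma dir: fixes a e :: real assumes "0<a" "a<1" "0<e"
  shows "\<exists>N::nat. N>0 \<and> frac (real N * a) < e"
proof (cases "a \<in> \<rat>")
  case True
  then obtain p q where pq: "a = of_int p / of_int q" "q>0" by (metis Rats_cases')
  have "real (nat q) * a = of_int p" using pq by simp
  then have "frac (real (nat q) * a) = 0" by simp
  then show ?thesis using pq assms by (intro exI[of _ "nat q"]) auto
next
  case False
  then obtain k where "k>0" "\<bar>frac(real k * a) - 0\<bar> < e"
    using Kronecker_approx_1_explicit[of a 0 e] assms by auto
  then show ?thesis by auto
qed

lemma pm_empty: assumes "algebra W F" "P \<in> prob_measures W F" shows "P {} = 0"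
proof -
  interpret algebra W F by fact
  have "P ({} \<union> {}) = P {} + P {}" using assms(2) unfolding prob_measures_def by blast
  then show ?thesis by simp
qed

lemma pm_add: assumes "P \<in> prob_measures W F" "A \<in> F" "B \<in> F" "A \<inter> B = {}"
  shows "P (A \<union> B) = P A + P B" using assms unfolding prob_measures_def by blast

lemma pm_nonneg: assumes "P \<in> prob_measures W F" "A \<in> F" shows "0 \<le> P A"
  using assms unfolding prob_measures_def by blast

lemma pm_split: assumes "algebra W F" "P \<in> prob_measures W F" "A \<in> F" "B \<in> F"
  shows "P A = P (A \<inter> B) + P (A - B)"
proof -
  interpret algebra W F by fact
  have "A = (A \<inter> B) \<union> (A - B)" by auto
  then have "P A = P ((A \<inter> B) \<union> (A - B))" by simp
  also have "\<dots> = P (A \<inter> B) + P (A - B)" using assms by (intro pm_add) auto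
  finally show ?thesis .
qed

lemma pm_compl: assumes "algebra W F" "P \<in> prob_measures W F" "B \<in> F"
  shows "P (W - B) = 1 - P B"
proof -
  interpret algebra W F by fact
  have "P W = P (W \<inter> B) + P (W - B)" using pm_split[OF assms(1,2) top assms(3)] .
  moreover have "W \<inter> B = B" using assms(3) sets_into_space by auto
  moreover have "P W = 1" using assms(2) unfolding prob_measures_def by blast
  ultimately show ?thesis by simp
qed

lemma push_prob: assumes "algebra W F" "algebra W' F'" "rep_shift f W F W' F'" "P \<in> prob_measures W F"
  shows "pushforward f W F' P \<in> prob_measures W' F'"
proof -
  interpret M: algebra W F by fact
  interpret M': algebra W' F' by fact
  have pre: "\<And>B. B \<in> F' \<Longrightarrow> f -` B \<inter> W \<in> F" using assms(3) unfolding rep_shift_def by blast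
  have im: "f ` W = W'" using assms(3) unfolding rep_shift_def by blast
  have "f -` W' \<inter> W = W" using im by auto
  moreover have "P W = 1" using assms(4) unfolding prob_measures_def by blast
  moreover have "\<forall>A\<in>F'. 0 \<le> pushforward f W F' P A"
    using pre assms(4) unfolding pushforward_def prob_measures_def by auto
  moreover have "\<forall>A\<in>F'. \<forall>B\<in>F'. A \<inter> B = {} \<longrightarrow> pushforward f W F' P (A \<union> B) = pushforward f W F' P A + pushforward f W F' P B"
  proof (intro ballI impI)
    fix A B assume AB: "A \<in> F'" "B \<in> F'" "A \<inter> B = {}"
    have "f -` (A \<union> B) \<inter> W = (f -` A \<inter> W) \<union> (f -` B \<inter> W)" by auto
    moreover have "(f -` A \<inter> W) \<inter> (f -` B \<inter> W) = {}" using AB by auto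
    ultimately show "pushforward f W F' P (A \<union> B) = pushforward f W F' P A + pushforward f W F' P B"
      using AB pre pm_add[OF assms(4)] M'.Un unfolding pushforward_def by auto
  qed
  ultimately show ?thesis unfolding prob_measures_def pushforward_def using M'.top by auto
qed

lemma fin_sum: assumes "finite N" "R \<in> prob_measures N (Pow N)" "S \<subseteq> N"
  shows "R S = (\<Sum>q\<in>S. R {q})"
  using finite_subset[OF assms(3,1)] assms(3)
proof (induction S rule: finite_subset_induct')
  case empty
  then show ?case using pm_empty[OF algebra_Pow assms(2)] by simp
next
  case (insert a S)
  have "R (insert a S) = R ({a} \<union> S)" by simp
  also have "\<dots> = R {a} + R S" using insert by (intro pm_add[OF assms(2)]) auto
  finally show ?case using insert by simp
qed

lemma wt_prob: assumes "finite N" "\<And>q. q \<in> N \<Longrightarrow> 0 \<le> wt q" "sum wt N = 1"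
  shows "(\<lambda>S. if S \<subseteq> N then sum wt S else 0) \<in> prob_measures N (Pow N)"
  unfolding prob_measures_def using assms
  by (auto intro!: sum_nonneg sum.union_disjoint intro: finite_subset)

lemma fin_eq: assumes "finite N" "P \<in> prob_measures N (Pow N)" "R \<in> prob_measures N (Pow N)"
  "\<And>q. q \<in> N \<Longrightarrow> P {q} = R {q}" shows "P = R"
proof
  fix S show "P S = R S"
  proof (cases "S \<subseteq> N")
    case True
    then show ?thesis using fin_sum[OF assms(1,2) True] fin_sum[OF assms(1,3) True] assms(4)
      by (auto intro: sum.cong)
  next
    case False
    then show ?thesis using assms(2,3) unfolding prob_measures_def by auto
  qed
qed

lemma modinj: assumes "(i::nat) < Nn" "j < Nn" "(i + n) mod Nn = (j + n) mod Nn" "i \<le> j" shows "i = j"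
proof -
  have "Nn dvd (j + n) - (i + n)" using assms mod_eq_dvd_iff_nat[of "i+n" "j+n" Nn] by simp
  then have "Nn dvd j - i" by simp
  moreover have "j - i < Nn" using assms by simp
  ultimately have "j - i = 0" using nat_dvd_not_less by (metis neq0_conv)
  then show ?thesis using assms by simp
qed

lemma modperm: assumes "(Nn::nat) > 0" shows "bij_betw (\<lambda>j. (j + n) mod Nn) {..<Nn} {..<Nn}"
proof -
  have i: "inj_on (\<lambda>j. (j + n) mod Nn) {..<Nn}"
  proof
    fix i j assume "i \<in> {..<Nn}" "j \<in> {..<Nn}" "(i + n) mod Nn = (j + n) mod Nn"
    then show "i = j" using modinj[of i Nn j n] modinj[of j Nn i n] by (cases "i \<le> j") auto
  qed
  moreover have s: "(\<lambda>j. (j + n) mod Nn) ` {..<Nn} \<subseteq> {..<Nn}" using assms by auto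
  moreover have "card ((\<lambda>j. (j + n) mod Nn) ` {..<Nn}) = card {..<Nn::nat}" using card_image[OF i] by simp
  ultimately have "(\<lambda>j. (j + n) mod Nn) ` {..<Nn} = {..<Nn}" using card_subset_eq[OF finite_lessThan s] by simp
  then show ?thesis using i unfolding bij_betw_def by simp
qed

lemma modcard: assumes "(Nn::nat) > 0" "k \<le> Nn"
  shows "card {j\<in>{..<Nn}. (j + n) mod Nn < k} = k"
proof -
  let ?h = "\<lambda>j. (j + n) mod Nn"
  have b: "bij_betw ?h {..<Nn} {..<Nn}" by (rule modperm[OF assms(1)])
  then have im: "?h ` {..<Nn} = {..<Nn}" and inj: "inj_on ?h {..<Nn}" unfolding bij_betw_def by simp_all
  have e: "?h ` {j\<in>{..<Nn}. ?h j < k} = {..<k}"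
  proof
    show "?h ` {j\<in>{..<Nn}. ?h j < k} \<subseteq> {..<k}" by auto
    show "{..<k} \<subseteq> ?h ` {j\<in>{..<Nn}. ?h j < k}"
    proof
      fix i assume "i \<in> {..<k}"
      then have "i \<in> ?h ` {..<Nn}" using im assms by auto
      then obtain j where "j \<in> {..<Nn}" "i = ?h j" by blast
      then show "i \<in> ?h ` {j\<in>{..<Nn}. ?h j < k}" using \<open>i \<in> {..<k}\<close> by auto
    qed
  qed
  have "inj_on ?h {j\<in>{..<Nn}. ?h j < k}"
    by (rule inj_on_subset[OF inj]) auto
  then have "card (?h ` {j\<in>{..<Nn}. ?h j < k}) = card {j\<in>{..<Nn}. ?h j < k}"
    by (rule card_image)
  then show ?thesis using e by simp
qed

lemma sum_ifsplit: "(\<Sum>j<N. if P j then (X::real) else Y) = real N * Y + (\<Sum>j<N. if P j then X - Y else 0)"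
proof -
  have "(\<Sum>j<N. if P j then (X::real) else Y) = (\<Sum>j<N. Y + (if P j then X - Y else 0))"
    by (rule sum.cong) auto
  also have "\<dots> = real N * Y + (\<Sum>j<N. if P j then X - Y else 0)" by (simp add: sum.distrib)
  finally show ?thesis .
qed
lemma sum_if_const: "finite J \<Longrightarrow> (\<Sum>j\<in>J. if P j then (h::real) else 0) = real (card {j\<in>J. P j}) * h"
  by (simp add: sum.inter_filter[symmetric])

theorem proposition4p3:
  fixes Upd :: "'w upd_family" and W :: "'w set" and F :: "'w set set"
    and Pr Pr' :: "'w set \<Rightarrow> real" and A B :: "'w set"
  assumes universe: "infinite (UNIV :: 'w set)"
    and fam: "family_of_update_functions Upd"
    and p1: "P1 Upd" and p2: "P2 Upd"
    and M: "algebra W F"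
    and Pr: "Pr \<in> prob_measures W F"
    and A: "A \<in> F" and B: "B \<in> F"
    and Pr': "Pr' \<in> Upd W F {Pr} B"
    and pos: "0 < cond_prob Pr A B" and lt1: "cond_prob Pr A B < 1"
    and below: "Pr' A < cond_prob Pr A B"
  shows "\<exists>Pr''\<in>Upd W F {Pr} B. Pr'' A > cond_prob Pr A B"
proof (rule ccontr)
  assume neg: "\<not> ?thesis"
  define a where "a = cond_prob Pr A B"
  have H: "\<And>R. R \<in> Upd W F {Pr} B \<Longrightarrow> R A \<le> a" using neg a_def by (auto simp: not_less)
  interpret M: algebra W F by (rule M)
  have P1': "R \<in> prob_measures W' F' \<and> R B' = 1"
    if "algebra W' F'" "X \<subseteq> prob_measures W' F'" "B' \<in> F'" "R \<in> Upd W' F' X B'" for W' F' X B' R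
    using p1 that unfolding P1_def by blast
  have P2': "Upd W' F' (pushforward f W1 F' ` X) B' = pushforward f W1 F' ` Upd W1 F1 X (f -` B' \<inter> W1)"
    if "algebra W1 F1" "algebra W' F'" "rep_shift f W1 F1 W' F'" "X \<subseteq> prob_measures W1 F1" "B' \<in> F'"
    for W1 F1 W' F' f X B'
    using p2 that unfolding P2_def by blast
  have AW: "A \<subseteq> W" and BW: "B \<subseteq> W" using A B M.sets_into_space by auto
  define pA where "pA = Pr (A \<inter> B)"
  define pB where "pB = Pr B"
  have Pr0e: "Pr {} = 0" by (rule pm_empty[OF M Pr])
  have pBle: "pB \<le> 1" using pm_compl[OF M Pr B] pm_nonneg[OF Pr M.Diff[OF M.top B]] pB_def by simp
  have pApos: "0 \<le> pA" using pm_nonneg[OF Pr M.Int[OF A B]] pA_def by simp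
  have adef: "a = pA / pB" using a_def pA_def pB_def cond_prob_def by simp
  have pBpos: "pB > 0"
  proof (rule ccontr)
    assume "\<not> pB > 0"
    moreover have "pB \<ge> 0" using pm_nonneg[OF Pr B] pB_def by simp
    ultimately have "pB = 0" by simp
    then show False using pos a_def adef by simp
  qed
  have apos: "0 < a" and alt1: "a < 1" using pos lt1 a_def by auto
  have pAlt: "pA < pB" using alt1 adef pBpos by (simp add: divide_less_eq)
  have pApos': "pA > 0" using apos adef pBpos by (simp add: zero_less_divide_iff)
  have ABne: "A \<inter> B \<noteq> {}" using pApos' Pr0e pA_def by auto
  have BAne: "B - A \<noteq> {}"
  proof
    assume "B - A = {}"
    then have "A \<inter> B = B" by auto
    then show False using pAlt pA_def pB_def by simp
  qed
  have PrBA: "Pr (B - A) = pB - pA"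
    using pm_split[OF M Pr B A] pA_def pB_def by (simp add: Int_commute)
  obtain g :: "nat \<Rightarrow> 'w" where ginj: "inj g" using infinite_countable_subset[OF universe] by blast
  define x where "x = g 0"
  define y where "y = g 1"
  define z where "z = g 2"
  have xy: "x \<noteq> y" "x \<noteq> z" "y \<noteq> z" using ginj unfolding x_def y_def z_def inj_def by fastforce+
  define c where "c = (\<lambda>w. if w \<in> A \<inter> B then x else if w \<in> B then y else z)"
  define W0 where "W0 = c ` W"
  define zt where "zt = (if W - B = {} then x else z)"
  have W0eq: "W0 = {x, y, zt}"
  proof
    show "W0 \<subseteq> {x, y, zt}" unfolding W0_def c_def zt_def by auto
    have "x \<in> W0" using ABne AW unfolding W0_def c_def by force
    moreover have "y \<in> W0" using BAne BW unfolding W0_def c_def by force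
    moreover have "zt \<in> W0" using \<open>x \<in> W0\<close> unfolding W0_def c_def zt_def by force
    ultimately show "{x, y, zt} \<subseteq> W0" by auto
  qed
  have ztne: "zt \<noteq> y" using xy zt_def by auto
  have finW0: "finite W0" using W0eq by simp
  have preC: "c -` S \<inter> W = (if x \<in> S then A \<inter> B else {}) \<union> (if y \<in> S then B - A else {}) \<union> (if z \<in> S then W - B else {})" for S
    using xy AW BW unfolding c_def by (auto split: if_splits)
  have preCF: "c -` S \<inter> W \<in> F" for S
    unfolding preC using A B by (auto intro!: M.Un M.Int M.Diff M.top)
  have alg0: "algebra W0 (Pow W0)" by (rule algebra_Pow)
  have rsc: "rep_shift c W F W0 (Pow W0)" unfolding rep_shift_def W0_def using preCF by auto
  define B0 where "B0 = {x, y}"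
  have B0P: "B0 \<in> Pow W0" using W0eq B0_def by auto
  have preB0: "c -` B0 \<inter> W = B" unfolding preC B0_def using xy BW by auto
  define Pr0 where "Pr0 = pushforward c W (Pow W0) Pr"
  have Pr0P: "Pr0 \<in> prob_measures W0 (Pow W0)" unfolding Pr0_def by (rule push_prob[OF M alg0 rsc Pr])
  define U0 where "U0 = Upd W0 (Pow W0) {Pr0} B0"
  have U0eq: "U0 = pushforward c W (Pow W0) ` Upd W F {Pr} B"
    using P2'[OF M alg0 rsc _ B0P, of "{Pr}"] Pr unfolding U0_def Pr0_def preB0 by simp
  have pushx: "pushforward c W (Pow W0) R {x} = R (A \<inter> B)" for R
    unfolding pushforward_def preC using W0eq xy by auto
  have Pr0x: "Pr0 {x} = pA" using pushx pA_def Pr0_def by simp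
  have Pr0y: "Pr0 {y} = pB - pA" unfolding Pr0_def pushforward_def preC using W0eq xy PrBA by auto
  have Pr0z: "z \<in> W0 \<Longrightarrow> Pr0 {z} = 1 - pB"
    unfolding Pr0_def pushforward_def preC using xy pm_compl[OF M Pr B] pB_def by auto
  have HM0: "R0 {x} \<le> a" if R0U: "R0 \<in> U0" for R0
  proof -
    obtain R where R: "R \<in> Upd W F {Pr} B" "R0 = pushforward c W (Pow W0) R" using R0U U0eq by auto
    have RP: "R \<in> prob_measures W F" using P1'[OF M _ B R(1)] Pr by auto
    have "R0 {x} = R (A \<inter> B)" using R pushx by simp
    also have "\<dots> \<le> R A" using pm_split[OF M RP A B] pm_nonneg[OF RP M.Diff[OF A B]] by simp
    also have "\<dots> \<le> a" using H R by simp
    finally show ?thesis .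
  qed
  define Pr0' where "Pr0' = pushforward c W (Pow W0) Pr'"
  have Pr0'U: "Pr0' \<in> U0" using U0eq Pr' Pr0'_def by simp
  have Pr'P: "Pr' \<in> prob_measures W F" using P1'[OF M _ B Pr'] Pr by auto
  have Pr0'x: "Pr0' {x} < a"
  proof -
    have "Pr0' {x} = Pr' (A \<inter> B)" using pushx Pr0'_def by simp
    also have "\<dots> \<le> Pr' A" using pm_split[OF M Pr'P A B] pm_nonneg[OF Pr'P M.Diff[OF A B]] by simp
    finally show ?thesis using below a_def by simp
  qed
  define eps where "eps = a - Pr0' {x}"
  have epspos: "eps > 0" using Pr0'x eps_def by simp
  obtain Nn :: nat where Nn: "Nn > 0" "frac (real Nn * a) < eps" using dir[OF apos alt1 epspos] by blast
  define k where "k = nat \<lfloor>real Nn * a\<rfloor>"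
  have fl0: "\<lfloor>real Nn * a\<rfloor> \<ge> 0" using apos by simp
  have kreal: "real k = of_int \<lfloor>real Nn * a\<rfloor>" using fl0 k_def by simp
  have kle: "real k \<le> real Nn * a" using kreal by linarith
  have kgap: "real Nn * a - real k < eps" using Nn(2) kreal unfolding frac_def by linarith
  have "real Nn * a < real Nn * 1" using alt1 Nn(1) by (intro mult_strict_left_mono) auto
  then have kltr: "real k < real Nn" using kle by simp
  then have klt: "k < Nn" by simp
  define mu where "mu = (pB - pA) / (real Nn - real k)"
  define dl where "dl = pA - real k * mu"
  have Nk: "real Nn - real k > 0" using kltr by simp
  have mu0: "mu \<ge> 0" using pAlt Nk mu_def by simp
  have muNk: "mu * (real Nn - real k) = pB - pA" using Nk mu_def by simp
  have dl0: "dl \<ge> 0"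
  proof -
    have "real k * pB \<le> real Nn * pA" using kle adef pBpos by (simp add: le_divide_eq mult.commute mult.left_commute)
    then have "real k * (pB - pA) \<le> pA * (real Nn - real k)" by (simp add: algebra_simps)
    then have "real k * mu \<le> pA" using Nk mu_def by (simp add: divide_le_eq mult.commute)
    then show ?thesis using dl_def by simp
  qed
  define wi where "wi = (\<lambda>j::nat. if j < Nn then mu else if j = Nn then dl else 1 - pB)"
  define NN where "NN = g ` {..<Nn+2}"
  define wt where "wt = (\<lambda>q. wi (inv g q))"
  define win where "win = (\<lambda>n j::nat. (j + n) mod Nn < k)"
  define Fi where "Fi = (\<lambda>n j::nat. if j < Nn then (if win n j then x else y) else if j = Nn then x else zt)"
  define f where "f = (\<lambda>n q. Fi n (inv g q))"
  define Q where "Q = (\<lambda>S. if S \<subseteq> NN then sum wt S else 0)"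
  have finNN: "finite NN" unfolding NN_def by simp
  have ginjon: "inj_on g J" for J using ginj by (simp add: inj_on_def inj_def)
  have sumg: "sum h (g ` J) = (\<Sum>j\<in>J. h (g j))" for h :: "'w \<Rightarrow> real" and J
    by (simp add: sum.reindex[OF ginjon])
  have invg: "inv g (g j) = j" for j using ginj by simp
  have split2: "(\<Sum>j<Nn+2. h j) = (\<Sum>j<Nn. h j) + h Nn + h (Nn+1)" for h :: "nat \<Rightarrow> real"
    by (simp add: numeral_2_eq_2)
  have sumwi: "(\<Sum>j<Nn+2. wi j) = 1"
    unfolding split2 using muNk unfolding wi_def dl_def by (simp add: algebra_simps)
  have QP: "Q \<in> prob_measures NN (Pow NN)"
    unfolding Q_def
  proof (rule wt_prob[OF finNN])
    show "0 \<le> wt q" if "q \<in> NN" for q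
      using that mu0 dl0 pBle unfolding NN_def wt_def wi_def by (auto simp: invg)
    show "sum wt NN = 1" unfolding NN_def sumg wt_def invg using sumwi by simp
  qed
  have Rg: "R (g ` J) = (\<Sum>j\<in>J. R {g j})" if "R \<in> prob_measures NN (Pow NN)" "J \<subseteq> {..<Nn+2}" for R J
  proof -
    have "g ` J \<subseteq> NN" using that(2) NN_def by auto
    then show ?thesis using fin_sum[OF finNN that(1)] sumg by simp
  qed
  have Qsing: "Q {g j} = wi j" if "j < Nn+2" for j using that unfolding Q_def NN_def wt_def by (simp add: invg)
  have pref: "f n -` S \<inter> NN = g ` {j\<in>{..<Nn+2}. Fi n j \<in> S}" for n S
    unfolding f_def NN_def by (auto simp: invg)
  have wincard: "card {j\<in>{..<Nn}. win n j} = k" for n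
    unfolding win_def using modcard[OF Nn(1)] klt by simp
  have Fimage: "(Fi n) ` {..<Nn+2} = W0" for n
  proof
    show "Fi n ` {..<Nn + 2} \<subseteq> W0" unfolding W0eq Fi_def by auto
    have "card {j\<in>{..<Nn}. win n j} \<noteq> card {..<Nn}" using wincard[of n] klt by simp
    then have "{j\<in>{..<Nn}. win n j} \<noteq> {..<Nn}" by metis
    then obtain j where j: "j < Nn" "\<not> win n j" by blast
    have "Fi n j = y" using j Fi_def by simp
    moreover have "Fi n Nn = x" "Fi n (Nn+1) = zt" using Fi_def by simp_all
    ultimately have "x \<in> Fi n ` {..<Nn + 2}" "y \<in> Fi n ` {..<Nn + 2}" "zt \<in> Fi n ` {..<Nn + 2}"
      using j by (auto intro!: image_eqI)
    then show "W0 \<subseteq> Fi n ` {..<Nn + 2}" unfolding W0eq by auto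
  qed
  have algN: "algebra NN (Pow NN)" by (rule algebra_Pow)
  have rsf: "rep_shift (f n) NN (Pow NN) W0 (Pow W0)" for n
  proof -
    have "f n ` NN = (\<lambda>j. f n (g j)) ` {..<Nn+2}" unfolding NN_def by (rule image_image)
    also have "\<dots> = Fi n ` {..<Nn+2}" unfolding f_def invg by simp
    finally show ?thesis unfolding rep_shift_def using Fimage by auto
  qed
  have pushsing: "pushforward (f n) NN (Pow W0) R {p} = (\<Sum>j<Nn+2. if Fi n j = p then R {g j} else 0)"
    if "R \<in> prob_measures NN (Pow NN)" "p \<in> W0" for R n p
  proof -
    have "pushforward (f n) NN (Pow W0) R {p} = R (g ` {j\<in>{..<Nn+2}. Fi n j \<in> {p}})"
      unfolding pushforward_def pref using that(2) by simp
    also have "\<dots> = (\<Sum>j\<in>{j\<in>{..<Nn+2}. Fi n j \<in> {p}}. R {g j})" by (rule Rg[OF that(1)]) auto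
    also have "\<dots> = (\<Sum>j<Nn+2. if Fi n j \<in> {p} then R {g j} else 0)" by (rule sum.inter_filter) simp
    also have "\<dots> = (\<Sum>j<Nn+2. if Fi n j = p then R {g j} else 0)" by simp
    finally show ?thesis .
  qed
  have W0B: "zt = x \<Longrightarrow> pB = 1"
  proof -
    assume "zt = x"
    then have "W - B = {}" using zt_def xy by (auto split: if_splits)
    then have "B = W" using BW by auto
    then show "pB = 1" using Pr pB_def unfolding prob_measures_def by auto
  qed
  have winsum: "(\<Sum>j<Nn. if win n j then h else 0) = real k * h" for n and h :: real
    using sum_if_const[of "{..<Nn}" "win n" h] wincard by simp
  have pushQ: "pushforward (f n) NN (Pow W0) Q = Pr0" for n
  proof (rule fin_eq[OF finW0 push_prob[OF algN alg0 rsf QP] Pr0P])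
    fix p assume p: "p \<in> W0"
    have e: "pushforward (f n) NN (Pow W0) Q {p} = (\<Sum>j<Nn. if Fi n j = p then wi j else 0)
       + (if Fi n Nn = p then wi Nn else 0) + (if Fi n (Nn+1) = p then wi (Nn+1) else 0)"
    proof -
      have "(\<Sum>j<Nn. if Fi n j = p then Q {g j} else 0) = (\<Sum>j<Nn. if Fi n j = p then wi j else 0)"
        by (rule sum.cong) (auto simp: Qsing)
      then show ?thesis unfolding pushsing[OF QP p] split2 using Qsing[of Nn] Qsing[of "Nn+1"] by simp
    qed
    have s: "(\<Sum>j<Nn. if Fi n j = p then wi j else 0) = (\<Sum>j<Nn. if win n j then (if x = p then mu else 0) else (if y = p then mu else 0))"
      by (rule sum.cong) (auto simp: Fi_def wi_def)
    have s2: "(\<Sum>j<Nn. if win n j then (if x = p then mu else 0) else (if y = p then mu else 0))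
       = real Nn * (if y = p then mu else 0) + real k * ((if x = p then mu else 0) - (if y = p then mu else 0))"
      by (subst sum_ifsplit, subst winsum, rule refl)
    have Fv: "Fi n Nn = x" "Fi n (Nn+1) = zt" "wi Nn = dl" "wi (Nn+1) = 1 - pB" using Fi_def wi_def by simp_all
    have val: "pushforward (f n) NN (Pow W0) Q {p} = real Nn * (if y = p then mu else 0) + real k * ((if x = p then mu else 0) - (if y = p then mu else 0))
       + (if x = p then dl else 0) + (if zt = p then 1 - pB else 0)"
      using e s s2 Fv by simp
    have "p = x \<or> p = y \<or> (p = z \<and> zt = z)" using p W0eq zt_def by (auto split: if_splits)
    then show "pushforward (f n) NN (Pow W0) Q {p} = Pr0 {p}"
    proof (elim disjE conjE)
      assume px: "p = x"
      show ?thesis unfolding val using px xy Pr0x dl_def W0B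
        by (cases "zt = x") (auto simp: algebra_simps)
    next
      assume py: "p = y"
      show ?thesis unfolding val using py xy Pr0y muNk ztne
        by (auto simp: algebra_simps)
    next
      assume pz: "p = z" "zt = z"
      show ?thesis unfolding val using xy Pr0z p pz by auto
    qed
  qed
  define JE where "JE = {j\<in>{..<Nn+2}. j \<le> Nn \<or> zt = x}"
  define E where "E = g ` JE"
  have preE: "f n -` B0 \<inter> NN = E" for n
  proof -
    have "{j\<in>{..<Nn+2}. Fi n j \<in> B0} = JE"
      unfolding JE_def B0_def Fi_def using ztne xy by auto
    then show ?thesis unfolding pref E_def by simp
  qed
  have EP: "E \<in> Pow NN" unfolding E_def JE_def NN_def by auto
  have U0f: "U0 = pushforward (f n) NN (Pow W0) ` Upd NN (Pow NN) {Q} E" for n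
    using P2'[OF algN alg0 rsf[of n] _ B0P, of "{Q}"] QP pushQ[of n] preE[of n] unfolding U0_def by simp
  obtain R where R: "R \<in> Upd NN (Pow NN) {Q} E" "Pr0' = pushforward (f 0) NN (Pow W0) R"
    using Pr0'U U0f[of 0] by auto
  have RP: "R \<in> prob_measures NN (Pow NN)" and RE: "R E = 1" using P1'[OF algN _ EP R(1)] QP by auto
  define r where "r = (\<lambda>j. R {g j})"
  have r0: "r j \<ge> 0" if "j < Nn + 2" for j
    unfolding r_def using pm_nonneg[OF RP, of "{g j}"] that NN_def by auto
  define T where "T = r Nn + (if zt = x then r (Nn+1) else 0)"
  define Sx where "Sx = (\<lambda>n. (\<Sum>j<Nn. if win n j then r j else 0) + T)"
  have xW0: "x \<in> W0" using W0eq by simp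
  have pushx': "pushforward (f n) NN (Pow W0) R {x} = Sx n" for n
  proof -
    have "(\<Sum>j<Nn. if Fi n j = x then R {g j} else 0) = (\<Sum>j<Nn. if win n j then r j else 0)"
      by (rule sum.cong) (use xy in \<open>auto simp: Fi_def r_def\<close>)
    then show ?thesis unfolding pushsing[OF RP xW0] split2 Sx_def T_def
      by (simp add: Fi_def r_def)
  qed
  have Sxle: "Sx n \<le> a" if "n < Nn" for n
  proof -
    have "pushforward (f n) NN (Pow W0) R \<in> U0" using U0f[of n] R(1) by auto
    then show ?thesis using HM0 pushx' by metis
  qed
  have Sx0: "Sx 0 = a - eps" using pushx'[of 0] R(2) eps_def by simp
  have REsum: "(\<Sum>j<Nn. r j) + T = 1"
  proof -
    have "R E = (\<Sum>j\<in>JE. r j)" unfolding E_def r_def by (rule Rg[OF RP]) (auto simp: JE_def)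
    also have "\<dots> = (\<Sum>j<Nn+2. if j \<le> Nn \<or> zt = x then r j else 0)"
      unfolding JE_def by (rule sum.inter_filter) simp
    also have "\<dots> = (\<Sum>j<Nn. r j) + T" unfolding split2 T_def by simp
    finally show ?thesis using RE by simp
  qed
  have T0: "T \<ge> 0" unfolding T_def using r0[of Nn] r0[of "Nn+1"] by simp
  have colcard: "(\<Sum>n<Nn. if win n j then r j else 0) = real k * r j" for j
  proof -
    have "card {n\<in>{..<Nn}. win n j} = k"
      unfolding win_def using modcard[OF Nn(1), of k j] klt by (simp add: add.commute)
    then show ?thesis using sum_if_const[of "{..<Nn}" "\<lambda>n. win n j" "r j"] by simp
  qed
  have dsum: "(\<Sum>n<Nn. \<Sum>j<Nn. if win n j then r j else 0) = real k * (\<Sum>j<Nn. r j)"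
    by (subst sum.swap) (simp add: colcard sum_distrib_left)
  have lower: "(\<Sum>n<Nn. Sx n) \<ge> real k"
  proof -
    have "(\<Sum>n<Nn. Sx n) = real k * (\<Sum>j<Nn. r j) + real Nn * T"
      unfolding Sx_def by (simp add: sum.distrib dsum)
    also have "\<dots> = real k + (real Nn - real k) * T"
    proof -
      have "real k * (\<Sum>j<Nn. r j) + real Nn * T = real k * ((\<Sum>j<Nn. r j) + T) + (real Nn - real k) * T"
        by (simp add: algebra_simps)
      then show ?thesis unfolding REsum by simp
    qed
    finally show ?thesis using T0 kltr by simp
  qed
  have upper: "(\<Sum>n<Nn. Sx n) \<le> real Nn * a - eps"
  proof -
    have "(\<Sum>n<Nn. Sx n) \<le> (\<Sum>n<Nn. a - (if n = 0 then eps else 0))"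
      by (rule sum_mono) (use Sxle Sx0 in auto)
    also have "\<dots> = real Nn * a - eps" using Nn(1) by (simp add: sum_subtractf)
    finally show ?thesis .
  qed
  show False using lower upper kgap by linarith
qed
end
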